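(* Let $(P,\leqslant)$ be a conditionally-complete poset and let $P^* := \{x \in P : \exists\, y \in P,\ y \ll x\}$. Then for every directed subset $D$ of $P$ that is bounded above in $P$ and such that $D \cap P^*$ is nonempty, the set $D \cap P^*$ is directed and $\bigvee D = \bigvee (D \cap P^* )$ (suprema taken in $P$).
   Context: A poset is conditionally-complete if every nonempty subset bounded above has a supremum. A nonempty subset $D$ is directed if any two elements of $D$ have an upper bound in $D$. For $x,y \in P$, $x$ is way-below $y$, written $x \ll y$, if for every directed subset $D$ of $P$ bounded above with supremum $d_0$, $y \leqslant d_0$ implies $x \leqslant d$ for some $d \in D$. *)

theory Defs
  imports Main
begin

definition is_sup :: "'a::order set \<Rightarrow> 'a \<Rightarrow> bool" where
  "is_sup S s \<longleftrightarrow> (\<forall>x\<in>S. x \<le> s) \<and> (\<forall>u. (\<forall>x\<in>S. x \<le> u) \<longrightarrow> s \<le> u)"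

definition sup_of :: "'a::order set \<Rightarrow> 'a" where
  "sup_of S = (THE s. is_sup S s)"

definition cond_complete_poset :: "'a::order itself \<Rightarrow> bool" where
  "cond_complete_poset _ \<longleftrightarrow>
     (\<forall>S::'a set. S \<noteq> {} \<and> bdd_above S \<longrightarrow> (\<exists>s. is_sup S s))"

definition directed :: "'a::order set \<Rightarrow> bool" where
  "directed D \<longleftrightarrow> D \<noteq> {} \<and> (\<forall>x\<in>D. \<forall>y\<in>D. \<exists>z\<in>D. x \<le> z \<and> y \<le> z)"

definition way_below :: "'a::order \<Rightarrow> 'a \<Rightarrow> bool" (infix "\<lless>" 50) where
  "x \<lless> y \<longleftrightarrow> (\<forall>D d0. directed D \<and> bdd_above D \<and> is_sup D d0 \<and> y \<le> d0
                        \<longrightarrow> (\<exists>d\<in>D. x \<le> d))"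

definition Pstar :: "'a::order set" where
  "Pstar = {x. \<exists>y. y \<lless> x}"

end

theory Submission
  imports Defs
begin

lemma Pstar_up: "x \<in> Pstar \<Longrightarrow> x \<le> z \<Longrightarrow> z \<in> Pstar"
proof -
  assume "x \<in> Pstar" "x \<le> z"
  then obtain y where y: "y \<lless> x" unfolding Pstar_def by blast
  have "y \<lless> z" unfolding way_below_def
  proof (intro allI impI)
    fix D d0 assume "directed D \<and> bdd_above D \<and> is_sup D d0 \<and> z \<le> d0"
    then show "\<exists>d\<in>D. y \<le> d" using y \<open>x \<le> z\<close> unfolding way_below_def
      by (meson order_trans)
  qed
  then show "z \<in> Pstar" unfolding Pstar_def by blast
qed

theorem lemma2p1:
  fixes D :: "'a::order set"
  assumes "cond_complete_poset TYPE('a)"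
    and "directed D" and "bdd_above D" and "D \<inter> Pstar \<noteq> {}"
  shows "directed (D \<inter> Pstar) \<and> sup_of D = sup_of (D \<inter> Pstar)"
proof
  have dir: "\<forall>x\<in>D. \<forall>y\<in>D. \<exists>z\<in>D. x \<le> z \<and> y \<le> z" using assms(2) unfolding directed_def by blast
  show "directed (D \<inter> Pstar)" unfolding directed_def
    using assms(4) dir Pstar_up by (metis IntD1 IntD2 IntI)
  obtain p where p: "p \<in> D" "p \<in> Pstar" using assms(4) by blast
  have ub: "(\<forall>x\<in>D. x \<le> u) \<longleftrightarrow> (\<forall>x\<in>D \<inter> Pstar. x \<le> u)" for u
  proof
    assume h: "\<forall>x\<in>D \<inter> Pstar. x \<le> u"
    show "\<forall>x\<in>D. x \<le> u"
    proof
      fix x assume "x \<in> D"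
      then obtain z where "z \<in> D" "x \<le> z" "p \<le> z" using dir p by blast
      then have "z \<in> Pstar" using Pstar_up p by blast
      then show "x \<le> u" using h \<open>z \<in> D\<close> \<open>x \<le> z\<close> by (meson IntI order_trans)
    qed
  qed auto
  have "is_sup D = is_sup (D \<inter> Pstar)"
    unfolding is_sup_def using ub by (intro ext) blast
  then show "sup_of D = sup_of (D \<inter> Pstar)" unfolding sup_of_def by simp
qed

end
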